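(* Let $G$ be a finite group and $T,T'$ be $G$-transfer systems. If $(T,T')$ is a compatible pair, then $\mathrm{Hull}(T)\subseteq T'$.
   Context: A $G$-transfer system is a partial order $\to$ on the set of subgroups of $G$ such that: $K\to H$ implies $K\le H$; $H\to H$ for all $H$; $L\to K$ and $K\to H$ imply $L\to H$; $K\to H$ implies $K\cap L\to H\cap L$ for every $L\le G$; $K\to H$ implies $gKg^{-1}\to gHg^{-1}$ for all $g\in G$. A transfer system is saturated if whenever $L\le K\le H$ and $L\to H$ is in it, then $K\to H$ is in it; $\mathrm{Hull}(T)$ is the smallest saturated $G$-transfer system containing $T$. A pair $(T,T')$ of $G$-transfer systems is compatible if (1) $T\subseteq T'$, and (2) for all subgroups $A,B,C$ with $B,C\le A$: if $B\to A$ is in $T$ and $B\cap C\to B$ is in $T'$, then $C\to A$ is in $T'$. *)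

theory Defs
  imports "HOL-Algebra.Algebra"
begin

text \<open>A relation on subgroups of G is encoded as a set of pairs (K, H), meaning K \<rightarrow> H.\<close>

definition conjugate :: "('a, 'b) monoid_scheme \<Rightarrow> 'a \<Rightarrow> 'a set \<Rightarrow> 'a set" where
  "conjugate G g H = (\<lambda>h. g \<otimes>\<^bsub>G\<^esub> h \<otimes>\<^bsub>G\<^esub> inv\<^bsub>G\<^esub> g) ` H"

definition transfer_system :: "('a, 'b) monoid_scheme \<Rightarrow> ('a set \<times> 'a set) set \<Rightarrow> bool" where
  "transfer_system G T \<longleftrightarrow>
     T \<subseteq> {(K, H). subgroup K G \<and> subgroup H G \<and> K \<subseteq> H}
   \<and> (\<forall>H. subgroup H G \<longrightarrow> (H, H) \<in> T)
   \<and> (\<forall>L K H. (L, K) \<in> T \<longrightarrow> (K, H) \<in> T \<longrightarrow> (L, H) \<in> T)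
   \<and> (\<forall>K H L. (K, H) \<in> T \<longrightarrow> subgroup L G \<longrightarrow> (K \<inter> L, H \<inter> L) \<in> T)
   \<and> (\<forall>K H g. (K, H) \<in> T \<longrightarrow> g \<in> carrier G \<longrightarrow>
        (conjugate G g K, conjugate G g H) \<in> T)"

definition saturated :: "('a, 'b) monoid_scheme \<Rightarrow> ('a set \<times> 'a set) set \<Rightarrow> bool" where
  "saturated G T \<longleftrightarrow>
     (\<forall>L K H. subgroup L G \<longrightarrow> subgroup K G \<longrightarrow> subgroup H G \<longrightarrow>
        L \<subseteq> K \<longrightarrow> K \<subseteq> H \<longrightarrow> (L, H) \<in> T \<longrightarrow> (K, H) \<in> T)"

definition Hull :: "('a, 'b) monoid_scheme \<Rightarrow> ('a set \<times> 'a set) set \<Rightarrow> ('a set \<times> 'a set) set" where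
  "Hull G T = \<Inter> {S. transfer_system G S \<and> saturated G S \<and> T \<subseteq> S}"

definition compatible :: "('a, 'b) monoid_scheme \<Rightarrow> ('a set \<times> 'a set) set \<Rightarrow> ('a set \<times> 'a set) set \<Rightarrow> bool" where
  "compatible G T T' \<longleftrightarrow> T \<subseteq> T'
   \<and> (\<forall>A B C. subgroup A G \<longrightarrow> subgroup B G \<longrightarrow> subgroup C G \<longrightarrow> B \<subseteq> A \<longrightarrow> C \<subseteq> A \<longrightarrow>
        (B, A) \<in> T \<longrightarrow> (B \<inter> C, B) \<in> T' \<longrightarrow> (C, A) \<in> T')"

end

theory Submission
  imports Defs
begin
lemma conj_sub:
  fixes G (structure)
  assumes "group G" "subgroup H G" "g \<in> carrier G"
  shows "subgroup (conjugate G g H) G"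
proof -
  interpret group G by fact
  have Hc: "\<And>x. x \<in> H \<Longrightarrow> x \<in> carrier G" using subgroup.mem_carrier[OF assms(2)] .
  show ?thesis
  proof (rule subgroupI)
    show "conjugate G g H \<subseteq> carrier G" unfolding conjugate_def
    proof (rule image_subsetI)
      fix x assume "x \<in> H" then show "g \<otimes> x \<otimes> inv g \<in> carrier G" using Hc assms(3) by simp
    qed
    have "g \<otimes> \<one> \<otimes> inv g \<in> conjugate G g H" unfolding conjugate_def
      using subgroup.one_closed[OF assms(2)] by (rule imageI)
    then show "conjugate G g H \<noteq> {}" by (intro notI) simp
  next
    fix a assume "a \<in> conjugate G g H"
    then obtain h where h: "h \<in> H" "a = g \<otimes> h \<otimes> inv g" unfolding conjugate_def by (rule imageE)
    have "inv a = g \<otimes> inv h \<otimes> inv g"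
      using h Hc[OF h(1)] assms(3) by (simp add: inv_mult_group m_assoc)
    moreover have "g \<otimes> inv h \<otimes> inv g \<in> conjugate G g H" unfolding conjugate_def
      using subgroup.m_inv_closed[OF assms(2) h(1)] by (rule imageI)
    ultimately show "inv a \<in> conjugate G g H" by simp
  next
    fix a b assume ab: "a \<in> conjugate G g H" "b \<in> conjugate G g H"
    from ab(1) obtain h where h: "h \<in> H" "a = g \<otimes> h \<otimes> inv g" unfolding conjugate_def by (rule imageE)
    from ab(2) obtain k where k: "k \<in> H" "b = g \<otimes> k \<otimes> inv g" unfolding conjugate_def by (rule imageE)
    have "a \<otimes> b = g \<otimes> (h \<otimes> k) \<otimes> inv g"
      using h k Hc[OF h(1)] Hc[OF k(1)] assms(3) by (simp add: m_assoc) (simp add: m_assoc[symmetric])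
    moreover have "g \<otimes> (h \<otimes> k) \<otimes> inv g \<in> conjugate G g H" unfolding conjugate_def
      using subgroup.m_closed[OF assms(2) h(1) k(1)] by (rule imageI)
    ultimately show "a \<otimes> b \<in> conjugate G g H" by simp
  qed
qed

lemma conj_inv:
  fixes G (structure)
  assumes "group G" "XX \<subseteq> carrier G" "g \<in> carrier G"
  shows "conjugate G (inv\<^bsub>G\<^esub> g) (conjugate G g XX) = XX"
proof -
  interpret group G by fact
  have e: "\<And>x. x \<in> XX \<Longrightarrow> inv g \<otimes> (g \<otimes> x \<otimes> inv g) \<otimes> inv (inv g) = x"
  proof -
    fix x assume "x \<in> XX"
    then have "x \<in> carrier G" using assms(2) by (rule subsetD[rotated])
    then show "inv g \<otimes> (g \<otimes> x \<otimes> inv g) \<otimes> inv (inv g) = x"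
      using assms(3) by (simp add: m_assoc) (simp add: m_assoc[symmetric])
  qed
  have "(\<lambda>x. inv g \<otimes> (g \<otimes> x \<otimes> inv g) \<otimes> inv (inv g)) ` XX = (\<lambda>x. x) ` XX"
    using e by (rule image_cong[OF refl])
  then show ?thesis unfolding conjugate_def image_image by simp
qed

lemma conj_inv2:
  fixes G (structure)
  assumes "group G" "XX \<subseteq> carrier G" "g \<in> carrier G"
  shows "conjugate G g (conjugate G (inv\<^bsub>G\<^esub> g) XX) = XX"
proof -
  have "conjugate G (inv (inv g)) (conjugate G (inv g) XX) = XX"
    using conj_inv[OF assms(1,2) group.inv_closed[OF assms(1,3)]] .
  then show ?thesis using group.inv_inv[OF assms(1,3)] by simp
qed

lemma conj_int:
  fixes G (structure)
  assumes "group G" "XX \<subseteq> carrier G" "YY \<subseteq> carrier G" "g \<in> carrier G"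
  shows "conjugate G g (XX \<inter> YY) = conjugate G g XX \<inter> conjugate G g YY"
proof -
  interpret group G by fact
  have "inj_on (\<lambda>h. g \<otimes> h \<otimes> inv g) (carrier G)"
    using assms(4) by (auto simp: inj_on_def)
  then show ?thesis unfolding conjugate_def
    using assms(2,3) by (rule inj_on_image_Int)
qed

lemma conj_mono: "XX \<subseteq> YY \<Longrightarrow> conjugate G g XX \<subseteq> conjugate G g YY"
  unfolding conjugate_def by (rule image_mono)

theorem mainTheorem6:
  fixes G :: "('a, 'b) monoid_scheme" and T T' :: "('a set \<times> 'a set) set"
  assumes "group G" and "finite (carrier G)"
    and "transfer_system G T" and "transfer_system G T'"
    and "compatible G T T'"
  shows "Hull G T \<subseteq> T'"
proof -
  define P where "P M A \<longleftrightarrow> (\<forall>L C. subgroup L G \<longrightarrow> subgroup C G \<longrightarrow> C \<subseteq> A \<inter> L \<longrightarrow>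
      (M \<inter> C, M \<inter> L) \<in> T' \<longrightarrow> (C, A \<inter> L) \<in> T')" for M A
  have PE: "\<And>M A L C. P M A \<Longrightarrow> subgroup L G \<Longrightarrow> subgroup C G \<Longrightarrow> C \<subseteq> A \<inter> L \<Longrightarrow>
      (M \<inter> C, M \<inter> L) \<in> T' \<Longrightarrow> (C, A \<inter> L) \<in> T'"
    unfolding P_def by blast
  have PI: "\<And>M A. (\<And>L C. subgroup L G \<Longrightarrow> subgroup C G \<Longrightarrow> C \<subseteq> A \<inter> L \<Longrightarrow>
      (M \<inter> C, M \<inter> L) \<in> T' \<Longrightarrow> (C, A \<inter> L) \<in> T') \<Longrightarrow> P M A"
    unfolding P_def by blast
  define S where "S = {(M, A). subgroup M G \<and> subgroup A G \<and> M \<subseteq> A \<and> P M A}"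
  have SE: "\<And>M A. (M, A) \<in> S \<Longrightarrow> subgroup M G \<and> subgroup A G \<and> M \<subseteq> A \<and> P M A"
    unfolding S_def by simp
  have SI: "\<And>M A. subgroup M G \<Longrightarrow> subgroup A G \<Longrightarrow> M \<subseteq> A \<Longrightarrow> P M A \<Longrightarrow> (M, A) \<in> S"
    unfolding S_def by simp
  note Td = assms(3)[unfolded transfer_system_def]
  note T'd = assms(4)[unfolded transfer_system_def]
  have T1: "\<And>K H. (K, H) \<in> T \<Longrightarrow> subgroup K G \<and> subgroup H G \<and> K \<subseteq> H"
    using Td[THEN conjunct1] by blast
  have T2: "\<And>L K H. (K, H) \<in> T \<Longrightarrow> subgroup L G \<Longrightarrow> (K \<inter> L, H \<inter> L) \<in> T"
    using Td[THEN conjunct2, THEN conjunct2, THEN conjunct2, THEN conjunct1] by blast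
  have T'2: "\<And>H. subgroup H G \<Longrightarrow> (H, H) \<in> T'"
    using T'd[THEN conjunct2, THEN conjunct1] by blast
  have T'4: "\<And>L K H. (K, H) \<in> T' \<Longrightarrow> subgroup L G \<Longrightarrow> (K \<inter> L, H \<inter> L) \<in> T'"
    using T'd[THEN conjunct2, THEN conjunct2, THEN conjunct2, THEN conjunct1] by blast
  have T'5: "\<And>K H g. (K, H) \<in> T' \<Longrightarrow> g \<in> carrier G \<Longrightarrow> (conjugate G g K, conjugate G g H) \<in> T'"
    using T'd[THEN conjunct2, THEN conjunct2, THEN conjunct2, THEN conjunct2] by blast
  have cp: "\<And>A B C. subgroup A G \<Longrightarrow> subgroup B G \<Longrightarrow> subgroup C G \<Longrightarrow> B \<subseteq> A \<Longrightarrow> C \<subseteq> A \<Longrightarrow>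
        (B, A) \<in> T \<Longrightarrow> (B \<inter> C, B) \<in> T' \<Longrightarrow> (C, A) \<in> T'"
    using assms(5)[unfolded compatible_def, THEN conjunct2] by blast
  have sgI: "\<And>A B. subgroup A G \<Longrightarrow> subgroup B G \<Longrightarrow> subgroup (A \<inter> B) G"
    using group.subgroups_Inter_pair[OF assms(1)] .
  have sc: "\<And>H. subgroup H G \<Longrightarrow> H \<subseteq> carrier G" using subgroup.subset by blast
  have ST: "S \<subseteq> T'"
  proof (rule subsetI)
    fix x assume "x \<in> S"
    then obtain M A where x: "x = (M, A)" "(M, A) \<in> S" by (cases x) simp
    then have x2: "subgroup M G" "subgroup A G" "M \<subseteq> A" "P M A" using SE by simp_all
    have "(M \<inter> M, M \<inter> A) \<in> T'" using T'2[OF x2(1)] x2(3) by (simp add: Int_absorb2)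
    then have "(M, A \<inter> A) \<in> T'" using PE[OF x2(4) x2(2) x2(1)] x2(3) by simp
    then show "x \<in> T'" using x by simp
  qed
  have TS: "T \<subseteq> S"
  proof (rule subsetI)
    fix x assume xT: "x \<in> T"
    then obtain M A where x: "x = (M, A)" "(M, A) \<in> T" by (cases x) simp
    then have x2: "subgroup M G" "subgroup A G" "M \<subseteq> A" using T1 by simp_all
    have "P M A"
    proof (rule PI)
      fix L C assume L: "subgroup L G" "subgroup C G" "C \<subseteq> A \<inter> L" "(M \<inter> C, M \<inter> L) \<in> T'"
      have "(M \<inter> L, A \<inter> L) \<in> T" using T2[OF x(2) L(1)] .
      moreover have "M \<inter> L \<inter> C = M \<inter> C" using L(3) by blast
      moreover have "M \<inter> L \<subseteq> A \<inter> L" using x2(3) by blast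
      ultimately show "(C, A \<inter> L) \<in> T'"
        using cp[of "A \<inter> L" "M \<inter> L" C] sgI[OF x2(2) L(1)] sgI[OF x2(1) L(1)] L(2,3,4) by simp
    qed
    then show "x \<in> S" using x SI x2 by simp
  qed
  have tsS: "transfer_system G S"
    unfolding transfer_system_def
  proof (intro conjI allI impI)
    show "S \<subseteq> {(K, H). subgroup K G \<and> subgroup H G \<and> K \<subseteq> H}" unfolding S_def by auto
  next
    fix H assume H: "subgroup H G"
    have "P H H"
    proof (rule PI)
      fix L C assume L: "subgroup L G" "subgroup C G" "C \<subseteq> H \<inter> L" "(H \<inter> C, H \<inter> L) \<in> T'"
      then show "(C, H \<inter> L) \<in> T'" by (simp add: Int_absorb1)
    qed
    then show "(H, H) \<in> S" using H SI by simp
  next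
    fix K M A assume a: "(K, M) \<in> S" "(M, A) \<in> S"
    then have s: "subgroup K G" "subgroup M G" "subgroup A G" "K \<subseteq> M" "M \<subseteq> A" "P K M" "P M A"
      using SE by simp_all
    have "P K A"
    proof (rule PI)
      fix L C assume L: "subgroup L G" "subgroup C G" "C \<subseteq> A \<inter> L" "(K \<inter> C, K \<inter> L) \<in> T'"
      have e: "K \<inter> (M \<inter> C) = K \<inter> C" "K \<inter> (M \<inter> L) = K \<inter> L" using s(4) by blast+
      have sub: "M \<inter> C \<subseteq> M \<inter> (M \<inter> L)" using L(3) by blast
      have "(K \<inter> (M \<inter> C), K \<inter> (M \<inter> L)) \<in> T'" using L(4) e by simp
      then have "(M \<inter> C, M \<inter> (M \<inter> L)) \<in> T'"
        by (rule PE[OF s(6) sgI[OF s(2) L(1)] sgI[OF s(2) L(2)] sub])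
      then have "(M \<inter> C, M \<inter> L) \<in> T'" by (simp add: inf_assoc[symmetric])
      then show "(C, A \<inter> L) \<in> T'" using PE[OF s(7) L(1) L(2) L(3)] by simp
    qed
    then show "(K, A) \<in> S" using s SI order_trans by blast
  next
    fix M A L' assume a: "(M, A) \<in> S" "subgroup L' G"
    then have s: "subgroup M G" "subgroup A G" "M \<subseteq> A" "P M A" using SE by simp_all
    have "P (M \<inter> L') (A \<inter> L')"
    proof (rule PI)
      fix L C assume L: "subgroup L G" "subgroup C G" "C \<subseteq> A \<inter> L' \<inter> L" "(M \<inter> L' \<inter> C, M \<inter> L' \<inter> L) \<in> T'"
      have e1: "M \<inter> L' \<inter> C = M \<inter> C" using L(3) by blast
      have e2: "M \<inter> L' \<inter> L = M \<inter> (L' \<inter> L)" by blast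
      have "(M \<inter> C, M \<inter> (L' \<inter> L)) \<in> T'" using L(4) e1 e2 by simp
      moreover have "C \<subseteq> A \<inter> (L' \<inter> L)" using L(3) by blast
      ultimately have "(C, A \<inter> (L' \<inter> L)) \<in> T'" using PE[OF s(4) sgI[OF a(2) L(1)] L(2)] by simp
      then show "(C, A \<inter> L' \<inter> L) \<in> T'" by (simp add: Int_assoc)
    qed
    moreover have "M \<inter> L' \<subseteq> A \<inter> L'" using s(3) by blast
    ultimately show "(M \<inter> L', A \<inter> L') \<in> S" using s a(2) sgI SI by simp
  next
    fix M A g assume a: "(M, A) \<in> S" "g \<in> carrier G"
    then have s: "subgroup M G" "subgroup A G" "M \<subseteq> A" "P M A" using SE by simp_all
    let ?c = "conjugate G g" and ?d = "conjugate G (inv\<^bsub>G\<^esub> g)"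
    have gi: "inv\<^bsub>G\<^esub> g \<in> carrier G" using a(2) assms(1) by (simp add: group.inv_closed)
    have "P (?c M) (?c A)"
    proof (rule PI)
      fix L C assume L: "subgroup L G" "subgroup C G" "C \<subseteq> ?c A \<inter> L" "(?c M \<inter> C, ?c M \<inter> L) \<in> T'"
      have cM: "?c M \<subseteq> carrier G" using sc[OF conj_sub[OF assms(1) s(1) a(2)]] .
      have cA: "?c A \<subseteq> carrier G" using sc[OF conj_sub[OF assms(1) s(2) a(2)]] .
      have e1: "?d (?c M \<inter> C) = M \<inter> ?d C"
        using conj_int[OF assms(1) cM sc[OF L(2)] gi] conj_inv[OF assms(1) sc[OF s(1)] a(2)] by simp
      have e2: "?d (?c M \<inter> L) = M \<inter> ?d L"
        using conj_int[OF assms(1) cM sc[OF L(1)] gi] conj_inv[OF assms(1) sc[OF s(1)] a(2)] by simp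
      have "(M \<inter> ?d C, M \<inter> ?d L) \<in> T'" using T'5[OF L(4) gi] e1 e2 by simp
      moreover have "?d C \<subseteq> A \<inter> ?d L"
        using conj_mono[OF L(3), of G "inv\<^bsub>G\<^esub> g"] conj_int[OF assms(1) cA sc[OF L(1)] gi]
          conj_inv[OF assms(1) sc[OF s(2)] a(2)] by simp
      ultimately have "(?d C, A \<inter> ?d L) \<in> T'"
        using PE[OF s(4) conj_sub[OF assms(1) L(1) gi] conj_sub[OF assms(1) L(2) gi]] by simp
      then have "(?c (?d C), ?c (A \<inter> ?d L)) \<in> T'" using T'5 a(2) by simp
      moreover have "?c (?d C) = C" using conj_inv2[OF assms(1) sc[OF L(2)] a(2)] .
      moreover have "?c (A \<inter> ?d L) = ?c A \<inter> L"
        using conj_int[OF assms(1) sc[OF s(2)] sc[OF conj_sub[OF assms(1) L(1) gi]] a(2)]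
          conj_inv2[OF assms(1) sc[OF L(1)] a(2)] by simp
      ultimately show "(C, ?c A \<inter> L) \<in> T'" by simp
    qed
    moreover have "?c M \<subseteq> ?c A" using conj_mono[OF s(3)] .
    ultimately show "(?c M, ?c A) \<in> S"
      using SI conj_sub[OF assms(1) s(1) a(2)] conj_sub[OF assms(1) s(2) a(2)] by simp
  qed
  have satS: "saturated G S" unfolding saturated_def
  proof (intro allI impI)
    fix L0 K H assume a: "subgroup L0 G" "subgroup K G" "subgroup H G" "L0 \<subseteq> K" "K \<subseteq> H" "(L0, H) \<in> S"
    then have p: "P L0 H" using SE by simp
    have "P K H"
    proof (rule PI)
      fix L C assume L: "subgroup L G" "subgroup C G" "C \<subseteq> H \<inter> L" "(K \<inter> C, K \<inter> L) \<in> T'"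
      have "(K \<inter> C \<inter> L0, K \<inter> L \<inter> L0) \<in> T'" using T'4[OF L(4) a(1)] .
      moreover have "K \<inter> C \<inter> L0 = L0 \<inter> C" "K \<inter> L \<inter> L0 = L0 \<inter> L" using a(4) by auto
      ultimately show "(C, H \<inter> L) \<in> T'" using PE[OF p L(1,2,3)] by simp
    qed
    then show "(K, H) \<in> S" using a SI by simp
  qed
  have "Hull G T \<subseteq> S" unfolding Hull_def using tsS satS TS by blast
  then show ?thesis using ST by blast
qed

end
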